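(* Fix an integer $k\ge 3$ and $\epsilon>0$. There is no $\epsilon$-edge locally differentially private algorithm (interactive or not) that estimates the number $C_k(G)$ of $k$-cycles in every graph $G$ on $n$ nodes with expected $\ell_2$-error $o(n^{k-1.5})$ (as $n\to\infty$).
   Context: $C_k(G)$ is the number of subgraphs of $G$ isomorphic to the cycle on $k$ vertices. Users are the nodes $v_1,\dots,v_n$; user $v_i$ knows only its adjacency vector $a_i\in\{0,1\}^n$. Two adjacency vectors are neighboring if they differ in exactly one bit. A randomized query $\mathcal{R}$ is $\epsilon'$-edge locally differentially private for a user if for all neighboring $a,a'$ and all sets $S$ of outcomes, $\Pr[\mathcal{R}(a)\in S]\le e^{\epsilon'}\Pr[\mathcal{R}(a')\in S]$. An algorithm is $\epsilon$-edge locally differentially private if, for every user $v_i$ and every sequence of queries $\mathcal{R}_1,\dots,\mathcal{R}_\kappa$ it poses to $v_i$ (possibly chosen adaptively), where $\mathcal{R}_j$ is $\epsilon_j$-edge locally differentially private, we have $\epsilon_1+\cdots+\epsilon_\kappa\le\epsilon$. The expected $\ell_2$-error of an estimate $\tilde C$ of $C_k(G)$ is $\sqrt{\mathbb{E}[(\tilde C - C_k(G))^2]}$. *)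

theory Defs
  imports "HOL-Probability.Probability"
begin

text \<open>Graphs on the node set {0..<n}: a symmetric, irreflexive adjacency relation
  that vanishes outside {0..<n}.  The adjacency vector of user v_i is G i
  (bits at positions \<ge> n are always False).\<close>

definition graph_on :: "nat \<Rightarrow> (nat \<Rightarrow> nat \<Rightarrow> bool) \<Rightarrow> bool" where
  "graph_on n G \<longleftrightarrow> (\<forall>i j. G i j \<longrightarrow> i < n \<and> j < n) \<and> (\<forall>i j. G i j = G j i) \<and> (\<forall>i. \<not> G i i)"

text \<open>C_k(G): number of subgraphs isomorphic to the k-cycle, counted as the number of
  distinct edge sets {{v_0,v_1},...,{v_(k-1),v_0}} of k-cycles in G.\<close>

definition cycle_count :: "nat \<Rightarrow> nat \<Rightarrow> (nat \<Rightarrow> nat \<Rightarrow> bool) \<Rightarrow> nat" where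
  "cycle_count k n G = card
     {{{v j, v ((j + 1) mod k)} | j. j < k} | v.
        inj_on v {0..<k} \<and> (\<forall>j<k. v j < n) \<and> (\<forall>j<k. G (v j) (v ((j + 1) mod k)))}"

definition neighboring :: "nat \<Rightarrow> (nat \<Rightarrow> bool) \<Rightarrow> (nat \<Rightarrow> bool) \<Rightarrow> bool" where
  "neighboring n a a' \<longleftrightarrow> (\<forall>j\<ge>n. \<not> a j \<and> \<not> a' j) \<and> card {j. a j \<noteq> a' j} = 1"

definition edge_ldp :: "nat \<Rightarrow> real \<Rightarrow> 'o measure \<Rightarrow> ((nat \<Rightarrow> bool) \<Rightarrow> 'o measure) \<Rightarrow> bool" where
  "edge_ldp n e Out R \<longleftrightarrow>
     (\<forall>a a'. neighboring n a a' \<longrightarrow>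
        (\<forall>S\<in>sets Out. measure (R a) S \<le> exp e * measure (R a') S))"

text \<open>Ask i Out R k: pose the randomized query R (output space Out) to user i; continue
  with k y on answer y (the choice of the next query may depend on the whole
  transcript).  Server-side randomness is a query
  that ignores its input (privacy cost 0).\<close>

datatype 'o protocol =
    Est real
  | Ask nat "'o measure" "(nat \<Rightarrow> bool) \<Rightarrow> 'o measure" "'o \<Rightarrow> 'o protocol"

primrec run :: "'o protocol \<Rightarrow> (nat \<Rightarrow> nat \<Rightarrow> bool) \<Rightarrow> real measure" where
  "run (Est x) G = return borel x"
| "run (Ask i Out R k) G = Giry_Monad.bind (R (G i)) (\<lambda>y. run (k y) G)"

text \<open>valid n b P: P is a well-formed protocol for users v_0..v_(n-1) such that along
  every transcript the privacy budgets spent on user i sum to at most b i.\<close>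

inductive valid :: "nat \<Rightarrow> (nat \<Rightarrow> real) \<Rightarrow> 'o protocol \<Rightarrow> bool" where
  valid_Est: "valid n b (Est x)"
| valid_Ask: "\<lbrakk> i < n; 0 \<le> e; e \<le> b i;
      \<forall>a. R a \<in> space (prob_algebra Out);
      edge_ldp n e Out R;
      \<forall>G. (\<lambda>y. run (k y) G) \<in> Out \<rightarrow>\<^sub>M prob_algebra borel;
      \<forall>y. valid n (b(i := b i - e)) (k y) \<rbrakk>
    \<Longrightarrow> valid n b (Ask i Out R k)"

definition eps_edge_ldp_alg :: "real \<Rightarrow> nat \<Rightarrow> 'o protocol \<Rightarrow> bool" where
  "eps_edge_ldp_alg \<epsilon> n P \<longleftrightarrow> valid n (\<lambda>_. \<epsilon>) P"

definition sq_error :: "'o protocol \<Rightarrow> (nat \<Rightarrow> nat \<Rightarrow> bool) \<Rightarrow> real \<Rightarrow> ennreal" where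
  "sq_error P G c = (\<integral>\<^sup>+ x. ennreal ((x - c)\<^sup>2) \<partial>run P G)"

end

theory Submission
  imports Defs
begin

definition piw :: "nat set \<Rightarrow> (nat\<Rightarrow>real) \<Rightarrow> (nat\<Rightarrow>real) \<Rightarrow> nat set \<Rightarrow> real" where
 "piw J w0 w1 S = (\<Prod>j\<in>S. w1 j) * (\<Prod>j\<in>J - S. w0 j)"

lemma sum_piw: "finite J \<Longrightarrow> (\<Sum>S\<in>Pow J. piw J w0 w1 S) = (\<Prod>j\<in>J. w0 j + w1 j)"
proof -
  assume "finite J"
  have "(\<Prod>j\<in>J. w0 j + w1 j) = (\<Prod>j\<in>J. w1 j + w0 j)" by (simp add: add.commute)
  then show ?thesis unfolding piw_def using prod_add[of J w1 w0] `finite J` by simp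
qed

lemma sum_Pow_insert:
  assumes "finite J" "a \<notin> J"
  shows "(\<Sum>S\<in>Pow (insert a J). g S) = (\<Sum>S\<in>Pow J. g S + g (insert a S))"
proof -
  have d: "Pow J \<inter> insert a ` Pow J = {}" using assms by auto
  have i: "inj_on (insert a) (Pow J)" using assms unfolding inj_on_def by auto
  show ?thesis
    by (simp add: Pow_insert sum.union_disjoint[OF _ _ d] assms sum.reindex[OF i] sum.distrib)
qed

lemma piw_nonneg: "\<forall>j\<in>J. 0 \<le> w0 j \<and> 0 \<le> w1 j \<Longrightarrow> S \<subseteq> J \<Longrightarrow> 0 \<le> piw J w0 w1 S"
  unfolding piw_def by (intro mult_nonneg_nonneg prod_nonneg) auto

lemma piw_insert0:
  assumes "finite J" "a \<notin> J" "S \<subseteq> J"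
  shows "piw (insert a J) w0 w1 S = w0 a * piw J w0 w1 S"
proof -
  have "insert a J - S = insert a (J - S)" using assms by auto
  then show ?thesis unfolding piw_def using assms by (simp add: finite_subset)
qed

lemma piw_insert1:
  assumes "finite J" "a \<notin> J" "S \<subseteq> J"
  shows "piw (insert a J) w0 w1 (insert a S) = w1 a * piw J w0 w1 S"
proof -
  have "insert a J - insert a S = J - S" using assms by auto
  moreover have "a \<notin> S" using assms by auto
  ultimately show ?thesis unfolding piw_def using assms by (simp add: finite_subset)
qed

lemma two_point:
  fixes w0 w1 \<alpha> \<beta> z :: real
  assumes "0 < w0 + w1"
  shows "w0 * (z - \<alpha>)^2 + w1 * (z - \<beta>)^2 =
     (w0 + w1) * (z - (w0 * \<alpha> + w1 * \<beta>) / (w0 + w1))^2 + w0 * w1 / (w0 + w1) * (\<beta> - \<alpha>)^2"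
proof -
  define T where "T = w0 + w1"
  have T: "T \<noteq> 0" using assms unfolding T_def by simp
  have e1: "z - (w0 * \<alpha> + w1 * \<beta>) / T = (T * z - w0 * \<alpha> - w1 * \<beta>) / T"
    using T by (simp add: field_simps)
  have "(T * (z - (w0 * \<alpha> + w1 * \<beta>) / T)^2 + w0 * w1 / T * (\<beta> - \<alpha>)^2)
      = ((T * z - w0 * \<alpha> - w1 * \<beta>)^2 + w0 * w1 * (\<beta> - \<alpha>)^2) / T"
    unfolding e1 using T by (simp add: power2_eq_square field_simps)
  also have "(T * z - w0 * \<alpha> - w1 * \<beta>)^2 + w0 * w1 * (\<beta> - \<alpha>)^2
     = T * (w0 * (z - \<alpha>)^2 + w1 * (z - \<beta>)^2)"
    unfolding T_def by (simp add: power2_eq_square algebra_simps)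
  finally show ?thesis using T unfolding T_def by simp
qed

lemma leaf:
  fixes f :: "nat set \<Rightarrow> real" and N z :: real
  assumes "finite J" "\<forall>j\<in>J. 0 \<le> w0 j \<and> 0 \<le> w1 j" "0 \<le> N"
    "\<forall>S\<subseteq>J. \<forall>j\<in>J-S. N \<le> f (insert j S) - f S"
  shows "N^2 * (\<Sum>j\<in>J. w0 j * w1 j / (w0 j + w1 j)^2) * (\<Prod>j\<in>J. w0 j + w1 j)
     \<le> (\<Sum>S\<in>Pow J. piw J w0 w1 S * (z - f S)^2)"
  using assms
proof (induction J arbitrary: f rule: finite_induct)
  case empty
  then show ?case by (simp add: piw_def)
next
  case (insert a J)
  have w: "\<forall>j\<in>J. 0 \<le> w0 j \<and> 0 \<le> w1 j" and wa: "0 \<le> w0 a" "0 \<le> w1 a"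
    using insert.prems by auto
  have L: "(\<Sum>S\<in>Pow (insert a J). piw (insert a J) w0 w1 S * (z - f S)^2)
     = (\<Sum>S\<in>Pow J. piw J w0 w1 S * (w0 a * (z - f S)^2 + w1 a * (z - f (insert a S))^2))"
    using insert.hyps
    by (auto simp: sum_Pow_insert piw_insert0 piw_insert1 algebra_simps intro!: sum.cong)
  show ?case
  proof (cases "w0 a + w1 a = 0")
    case True
    have "0 \<le> (\<Sum>S\<in>Pow (insert a J). piw (insert a J) w0 w1 S * (z - f S)^2)"
      using insert.prems by (intro sum_nonneg mult_nonneg_nonneg piw_nonneg) auto
    then show ?thesis using True insert.hyps by simp
  next
    case False
    define T where "T = w0 a + w1 a"
    have T: "0 < T" using False wa unfolding T_def by simp
    define g where "g S = (w0 a * f S + w1 a * f (insert a S)) / T" for S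
    have ginc: "\<forall>S\<subseteq>J. \<forall>j\<in>J-S. N \<le> g (insert j S) - g S"
    proof (intro allI impI ballI)
      fix S j assume S: "S \<subseteq> J" and j: "j \<in> J - S"
      have 1: "N \<le> f (insert j S) - f S" using insert.prems(3) S j by auto
      have s2: "insert a S \<subseteq> insert a J" "j \<in> insert a J - insert a S"
        using S j insert.hyps by auto
      have 2: "N \<le> f (insert j (insert a S)) - f (insert a S)"
        using insert.prems(3) s2 by blast
      have 3: "insert a (insert j S) = insert j (insert a S)" by auto
      have "g (insert j S) - g S = (w0 a * (f (insert j S) - f S) + w1 a * (f (insert j (insert a S)) - f (insert a S))) / T"
        unfolding g_def 3 using T by (simp add: diff_divide_distrib[symmetric] algebra_simps)
      also have "\<dots> \<ge> (w0 a * N + w1 a * N) / T"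
        using 1 2 wa T by (intro divide_right_mono add_mono mult_left_mono) auto
      also have "(w0 a * N + w1 a * N) / T = N" using T unfolding T_def by (simp add: field_simps)
      finally show "N \<le> g (insert j S) - g S" .
    qed
    have IH: "N^2 * (\<Sum>j\<in>J. w0 j * w1 j / (w0 j + w1 j)^2) * (\<Prod>j\<in>J. w0 j + w1 j)
       \<le> (\<Sum>S\<in>Pow J. piw J w0 w1 S * (z - g S)^2)"
      using insert.IH[of g] w insert.prems(2) ginc by simp
    have pt: "w0 a * (z - f S)^2 + w1 a * (z - f (insert a S))^2 \<ge>
         T * (z - g S)^2 + w0 a * w1 a / T * N^2" if "S \<subseteq> J" for S
    proof -
      have "N \<le> f (insert a S) - f S" using insert.prems(3) that insert.hyps by auto
      then have "N^2 \<le> (f (insert a S) - f S)^2" using insert.prems(2) by (intro power_mono) auto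
      moreover have "0 \<le> w0 a * w1 a / T" using wa T by simp
      ultimately have "w0 a * w1 a / T * N^2 \<le> w0 a * w1 a / T * (f (insert a S) - f S)^2"
        by (intro mult_left_mono)
      then show ?thesis using two_point[of "w0 a" "w1 a" z "f S" "f (insert a S)"] T
        unfolding T_def g_def by simp
    qed
    have "(\<Sum>S\<in>Pow J. piw J w0 w1 S * (w0 a * (z - f S)^2 + w1 a * (z - f (insert a S))^2))
       \<ge> (\<Sum>S\<in>Pow J. piw J w0 w1 S * (T * (z - g S)^2 + w0 a * w1 a / T * N^2))"
      using pt w by (intro sum_mono mult_left_mono piw_nonneg) auto
    also have "(\<Sum>S\<in>Pow J. piw J w0 w1 S * (T * (z - g S)^2 + w0 a * w1 a / T * N^2))
       = T * (\<Sum>S\<in>Pow J. piw J w0 w1 S * (z - g S)^2) + w0 a * w1 a / T * N^2 * (\<Prod>j\<in>J. w0 j + w1 j)"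
      using insert.hyps
      by (simp add: algebra_simps sum.distrib sum_distrib_left sum_distrib_right sum_piw[symmetric] sum_divide_distrib[symmetric])
    also have "\<dots> \<ge> T * (N^2 * (\<Sum>j\<in>J. w0 j * w1 j / (w0 j + w1 j)^2) * (\<Prod>j\<in>J. w0 j + w1 j))
        + w0 a * w1 a / T * N^2 * (\<Prod>j\<in>J. w0 j + w1 j)"
      using IH T by simp
    also have "T * (N^2 * (\<Sum>j\<in>J. w0 j * w1 j / (w0 j + w1 j)^2) * (\<Prod>j\<in>J. w0 j + w1 j))
        + w0 a * w1 a / T * N^2 * (\<Prod>j\<in>J. w0 j + w1 j)
      = N^2 * (\<Sum>j\<in>insert a J. w0 j * w1 j / (w0 j + w1 j)^2) * (\<Prod>j\<in>insert a J. w0 j + w1 j)"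
    proof -
      define P where "P = (\<Prod>j\<in>J. w0 j + w1 j)"
      define Sg where "Sg = (\<Sum>j\<in>J. w0 j * w1 j / (w0 j + w1 j)^2)"
      have key: "w0 a * w1 a / T * N^2 * P = N^2 * (w0 a * w1 a / T^2) * (T * P)"
        using T by (simp add: power2_eq_square field_simps)
      have "T * (N^2 * Sg * P) + w0 a * w1 a / T * N^2 * P = N^2 * (w0 a * w1 a / T^2 + Sg) * (T * P)"
        using key by (simp add: algebra_simps)
      moreover have "(\<Sum>j\<in>insert a J. w0 j * w1 j / (w0 j + w1 j)^2) = w0 a * w1 a / T^2 + Sg"
        "(\<Prod>j\<in>insert a J. w0 j + w1 j) = T * P"
        using insert.hyps unfolding Sg_def P_def T_def by simp_all
      ultimately show ?thesis unfolding Sg_def P_def by simp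
    qed
    finally show ?thesis using L by simp
  qed
qed


lemma AE_le_from_sets:
  assumes [measurable]: "u \<in> borel_measurable M" "v \<in> borel_measurable M"
  and fin: "(\<integral>\<^sup>+x. v x \<partial>M) \<noteq> \<infinity>"
  and le: "\<And>A. A \<in> sets M \<Longrightarrow> (\<integral>\<^sup>+x. u x * indicator A x \<partial>M) \<le> (\<integral>\<^sup>+x. v x * indicator A x \<partial>M)"
  shows "AE x in M. u x \<le> v x"
proof -
  define A where "A = {x\<in>space M. v x < u x}"
  have A[measurable]: "A \<in> sets M" unfolding A_def by measurable
  have "(\<integral>\<^sup>+x. v x * indicator A x \<partial>M) \<le> (\<integral>\<^sup>+x. v x \<partial>M)"
    by (intro nn_integral_mono) (auto split: split_indicator)
  then have f1: "(\<integral>\<^sup>+x. v x * indicator A x \<partial>M) \<noteq> \<infinity>" using fin by (auto simp: top_unique)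
  have "AE x in M. u x * indicator A x \<le> v x * indicator A x"
  proof (rule ccontr)
    assume c: "\<not> (AE x in M. u x * indicator A x \<le> v x * indicator A x)"
    have "(\<integral>\<^sup>+x. v x * indicator A x \<partial>M) < (\<integral>\<^sup>+x. u x * indicator A x \<partial>M)"
      by (rule nn_integral_less[OF _ _ f1 _ c]) (auto simp: A_def split: split_indicator)
    with le[OF A] show False by simp
  qed
  then show ?thesis using AE_space
  proof eventually_elim
    case (elim x)
    then show ?case by (cases "v x < u x") (auto simp: A_def not_less)
  qed
qed

lemma RN_real:
  assumes M: "prob_space M" and N: "prob_space N" and sets: "sets N = sets M"
    and up: "\<forall>A\<in>sets M. measure N A \<le> exp e * measure M A"
    and lo: "\<forall>A\<in>sets M. measure M A \<le> exp e * measure N A" and e: "0 \<le> e"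
  shows "\<exists>qr. qr \<in> borel_measurable M \<and> (\<forall>y. 0 \<le> qr y \<and> qr y \<le> exp e \<and> 1 \<le> exp e * qr y) \<and>
     (\<forall>h\<in>borel_measurable M. (\<integral>\<^sup>+y. h y \<partial>N) = (\<integral>\<^sup>+y. ennreal (qr y) * h y \<partial>M))"
proof -
  interpret M: prob_space M by fact
  interpret N: prob_space N by fact
  have ac: "absolutely_continuous M N"
    unfolding absolutely_continuous_def
  proof
    fix A assume "A \<in> null_sets M"
    then have A: "A \<in> sets M" "measure M A = 0" by (auto simp: null_sets_def M.emeasure_eq_measure)
    then have "measure N A \<le> 0" using up by auto
    then have "measure N A = 0" using measure_nonneg[of N A] by linarith
    then show "A \<in> null_sets N" using A sets by (auto simp: null_sets_def N.emeasure_eq_measure)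
  qed
  define q where "q = RN_deriv M N"
  have q[measurable]: "q \<in> borel_measurable M" unfolding q_def by simp
  have dens: "density M q = N" unfolding q_def by (rule M.density_RN_deriv[OF ac sets])
  have emN: "emeasure N A = (\<integral>\<^sup>+x. q x * indicator A x \<partial>M)" if "A \<in> sets M" for A
    using emeasure_density[OF q that] dens by simp
  have AE1: "AE x in M. q x \<le> ennreal (exp e)"
  proof (rule AE_le_from_sets)
    show "(\<integral>\<^sup>+x. ennreal (exp e) \<partial>M) \<noteq> \<infinity>" using M.emeasure_space_1 by (simp add: ennreal_mult_eq_top_iff)
    fix A assume A: "A \<in> sets M"
    have "(\<integral>\<^sup>+x. q x * indicator A x \<partial>M) = ennreal (measure N A)"
      using emN[OF A] N.emeasure_eq_measure by simp
    also have "\<dots> \<le> ennreal (exp e * measure M A)" using up A by (auto intro: ennreal_leI)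
    also have "\<dots> = (\<integral>\<^sup>+x. ennreal (exp e) * indicator A x \<partial>M)"
      using A by (simp add: nn_integral_cmult_indicator M.emeasure_eq_measure ennreal_mult)
    finally show "(\<integral>\<^sup>+x. q x * indicator A x \<partial>M) \<le> (\<integral>\<^sup>+x. ennreal (exp e) * indicator A x \<partial>M)" .
  qed simp_all
  have AE2: "AE x in M. 1 \<le> ennreal (exp e) * q x"
  proof (rule AE_le_from_sets)
    have "(\<integral>\<^sup>+x. ennreal (exp e) * q x \<partial>M) = ennreal (exp e) * emeasure N (space M)"
      using emN[of "space M"] by (simp add: nn_integral_cmult)
    moreover have "emeasure N (space M) = 1" using sets_eq_imp_space_eq[OF sets] N.emeasure_space_1 by simp
    ultimately show "(\<integral>\<^sup>+x. ennreal (exp e) * q x \<partial>M) \<noteq> \<infinity>"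
      by (simp add: ennreal_mult_eq_top_iff)
    fix A assume A: "A \<in> sets M"
    have "(\<integral>\<^sup>+x. 1 * indicator A x \<partial>M) = ennreal (measure M A)"
      using A M.emeasure_eq_measure by simp
    also have "\<dots> \<le> ennreal (exp e * measure N A)" using lo A by (auto intro: ennreal_leI)
    also have "\<dots> = ennreal (exp e) * emeasure N A"
      by (simp add: N.emeasure_eq_measure ennreal_mult)
    also have "\<dots> = ennreal (exp e) * (\<integral>\<^sup>+x. q x * indicator A x \<partial>M)"
      using emN[OF A] by simp
    also have "\<dots> = (\<integral>\<^sup>+x. ennreal (exp e) * q x * indicator A x \<partial>M)"
      using A by (subst nn_integral_cmult[symmetric]) (auto simp: mult.assoc)
    finally show "(\<integral>\<^sup>+x. 1 * indicator A x \<partial>M) \<le> (\<integral>\<^sup>+x. ennreal (exp e) * q x * indicator A x \<partial>M)" .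
  qed simp_all
  define qr where "qr y = (if q y \<le> ennreal (exp e) \<and> 1 \<le> ennreal (exp e) * q y then enn2real (q y) else 1)" for y
  have qr_meas: "qr \<in> borel_measurable M" unfolding qr_def by measurable
  have AEq: "AE y in M. ennreal (qr y) = q y"
    using AE1 AE2 by eventually_elim (auto simp: qr_def less_top[symmetric] top_unique intro!: ennreal_enn2real)
  have bnd: "0 \<le> qr y \<and> qr y \<le> exp e \<and> 1 \<le> exp e * qr y" for y
  proof (cases "q y \<le> ennreal (exp e) \<and> 1 \<le> ennreal (exp e) * q y")
    case True
    then have fin: "q y \<noteq> \<infinity>" by (auto simp: top_unique)
    then have eq: "q y = ennreal (enn2real (q y))" by (simp add: ennreal_enn2real_if)
    have "enn2real (q y) \<le> exp e" using True eq by (metis ennreal_le_iff exp_ge_zero)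
    moreover have "1 \<le> exp e * enn2real (q y)"
      using True eq by (metis ennreal_1 ennreal_le_iff ennreal_mult'' exp_ge_zero mult_nonneg_nonneg enn2real_nonneg)
    ultimately show ?thesis using True by (simp add: qr_def)
  next
    case False
    then show ?thesis using e unfolding qr_def by (auto simp del: ennreal_1)
  qed
  have int: "(\<integral>\<^sup>+y. h y \<partial>N) = (\<integral>\<^sup>+y. ennreal (qr y) * h y \<partial>M)" if h: "h \<in> borel_measurable M" for h
  proof -
    have "(\<integral>\<^sup>+y. h y \<partial>N) = (\<integral>\<^sup>+y. q y * h y \<partial>M)"
      unfolding q_def by (rule M.RN_deriv_nn_integral[OF ac sets h])
    also have "\<dots> = (\<integral>\<^sup>+y. ennreal (qr y) * h y \<partial>M)"
      using AEq by (intro nn_integral_cong_AE) auto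
    finally show ?thesis .
  qed
  show ?thesis using qr_meas bnd int by blast
qed



lemma sq_error_Est: "sq_error (Est x) G c = ennreal ((x - c)^2)"
  unfolding sq_error_def by (simp add: nn_integral_return)

lemma sq_error_Ask:
  assumes R: "R (G i) \<in> space (prob_algebra Out)"
    and K: "(\<lambda>y. run (k y) G) \<in> Out \<rightarrow>\<^sub>M prob_algebra borel"
  shows "sq_error (Ask i Out R k) G c = (\<integral>\<^sup>+y. sq_error (k y) G c \<partial>R (G i))"
proof -
  have s: "sets (R (G i)) = sets Out" using R by (simp add: space_prob_algebra)
  have K': "(\<lambda>y. run (k y) G) \<in> measurable (R (G i)) (subprob_algebra borel)"
    using measurable_prob_algebraD[OF K] by (subst measurable_cong_sets[OF s refl])
  show ?thesis unfolding sq_error_def run.simps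
    by (rule nn_integral_bind[OF _ K']) simp
qed

lemma sq_error_meas:
  assumes K: "(\<lambda>y. run (k y) G) \<in> Out \<rightarrow>\<^sub>M prob_algebra borel"
  shows "(\<lambda>y. sq_error (k y) G c) \<in> borel_measurable Out"
proof -
  have "(\<lambda>M. \<integral>\<^sup>+x. ennreal ((x - c)^2) \<partial>M) \<in> borel_measurable (subprob_algebra borel)"
    by (rule nn_integral_measurable_subprob_algebra) simp
  from measurable_compose[OF measurable_prob_algebraD[OF K] this]
  show ?thesis unfolding sq_error_def by simp
qed

definition Gr :: "nat \<Rightarrow> nat \<Rightarrow> nat set \<Rightarrow> nat \<Rightarrow> nat \<Rightarrow> bool" where
  "Gr n m S i j \<longleftrightarrow> i < n \<and> j < n \<and> i \<noteq> j \<and> \<not> (i div 2 = j div 2 \<and> i < 2*m \<and> j < 2*m \<and> i div 2 \<notin> S)"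

lemma Gr_graph: "graph_on n (Gr n m S)"
  unfolding graph_on_def Gr_def by auto

lemma Gr_far: "2*m \<le> i \<Longrightarrow> Gr n m S i = Gr n m {} i"
  unfolding Gr_def by auto

lemma Gr_near: "i < 2*m \<Longrightarrow> Gr n m S i = (if i div 2 \<in> S then Gr n m {i div 2} i else Gr n m {} i)"
  unfolding Gr_def by (auto simp: fun_eq_iff)

lemma neighboring_sym: "neighboring n a a' \<Longrightarrow> neighboring n a' a"
proof -
  have "{j. a' j \<noteq> a j} = {j. a j \<noteq> a' j}" by auto
  then show "neighboring n a a' \<Longrightarrow> neighboring n a' a" unfolding neighboring_def by simp
qed

lemma pair_eq:
  fixes x i :: nat
  assumes "x div 2 = i div 2" "x \<noteq> i"
  shows "x = (if even i then i + 1 else i - 1)"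
proof -
  have x: "x = 2 * (x div 2) + x mod 2" and i: "i = 2 * (i div 2) + i mod 2" by simp_all
  have "x mod 2 = 0 \<or> x mod 2 = 1" "i mod 2 = 0 \<or> i mod 2 = 1" by auto
  then show ?thesis using x i assms by (auto simp: even_iff_mod_2_eq_zero)
qed

lemma pair_props:
  fixes i :: nat
  assumes "i < 2*m"
  shows "(if even i then i + 1 else i - 1) div 2 = i div 2 \<and> (if even i then i + 1 else i - 1) \<noteq> i
     \<and> (if even i then i + 1 else i - 1) < 2*m"
proof (cases "even i")
  case True
  then obtain r where r: "i = 2*r" by (auto elim: evenE)
  then show ?thesis using assms True by auto
next
  case False
  then obtain r where r: "i = 2*r + 1" by (auto elim: oddE)
  then show ?thesis using assms False by auto
qed

lemma Gr_neighboring: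
  assumes "i < 2*m" "2*m \<le> n"
  shows "neighboring n (Gr n m {} i) (Gr n m {i div 2} i)"
proof -
  define p where "p = (if even i then i + 1 else i - 1)"
  have pp: "p div 2 = i div 2" "p \<noteq> i" "p < 2*m" using pair_props[OF assms(1)] unfolding p_def by auto
  have "{x. Gr n m {} i x \<noteq> Gr n m {i div 2} i x} = {p}"
  proof (intro set_eqI iffI)
    fix x assume "x \<in> {x. Gr n m {} i x \<noteq> Gr n m {i div 2} i x}"
    then have "x div 2 = i div 2" "x \<noteq> i" unfolding Gr_def by auto
    then show "x \<in> {p}" unfolding p_def using pair_eq by auto
  next
    fix x assume "x \<in> {p}"
    then have x: "x = p" by simp
    then show "x \<in> {x. Gr n m {} i x \<noteq> Gr n m {i div 2} i x}"
      unfolding Gr_def x using assms pp by simp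
  qed
  moreover have "\<forall>j\<ge>n. \<not> Gr n m {} i j \<and> \<not> Gr n m {i div 2} i j" unfolding Gr_def by auto
  ultimately show ?thesis unfolding neighboring_def by simp
qed



definition wok :: "real \<Rightarrow> (nat \<Rightarrow> real) \<Rightarrow> nat \<Rightarrow> (nat\<Rightarrow>real) \<Rightarrow> (nat\<Rightarrow>real) \<Rightarrow> bool" where
 "wok \<epsilon> b m w0 w1 \<longleftrightarrow> (\<forall>j<m. 0 \<le> w0 j \<and> 0 \<le> w1 j \<and> w1 j \<le> exp (2*\<epsilon> - b (2*j) - b (2*j+1)) * w0 j
     \<and> w0 j \<le> exp (2*\<epsilon> - b (2*j) - b (2*j+1)) * w1 j)"

lemma piw_upd:
  assumes "finite J" "j0 \<in> J" "S \<subseteq> J"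
  shows "piw J w0 (w1(j0 := w1 j0 * c)) S = piw J w0 w1 S * (if j0 \<in> S then c else 1)"
proof (cases "j0 \<in> S")
  case True
  have fS: "finite S" using assms finite_subset by blast
  have "(\<Prod>j\<in>S. (w1(j0 := w1 j0 * c)) j) = (w1(j0 := w1 j0 * c)) j0 * (\<Prod>j\<in>S - {j0}. (w1(j0 := w1 j0 * c)) j)"
    by (rule prod.remove[OF fS True])
  also have "(\<Prod>j\<in>S - {j0}. (w1(j0 := w1 j0 * c)) j) = (\<Prod>j\<in>S - {j0}. w1 j)"
    by (intro prod.cong) auto
  finally have "(\<Prod>j\<in>S. (w1(j0 := w1 j0 * c)) j) = c * (w1 j0 * (\<Prod>j\<in>S - {j0}. w1 j))"
    by simp
  also have "w1 j0 * (\<Prod>j\<in>S - {j0}. w1 j) = (\<Prod>j\<in>S. w1 j)"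
    by (rule prod.remove[OF fS True, symmetric])
  finally show ?thesis using True unfolding piw_def by simp
next
  case False
  have "(\<Prod>j\<in>S. (w1(j0 := w1 j0 * c)) j) = (\<Prod>j\<in>S. w1 j)"
    using False by (intro prod.cong) auto
  then show ?thesis using False unfolding piw_def by simp
qed

lemma ratio_bound:
  fixes w0 w1 E :: real
  assumes "0 \<le> w0" "0 \<le> w1" "1 \<le> E" "w1 \<le> E * w0" "w0 \<le> E * w1" "0 < w0 + w1"
  shows "1 / (4 * E) \<le> w0 * w1 / (w0 + w1)^2"
proof -
  have "(w0 + w1)^2 \<le> 4 * E * (w0 * w1)"
  proof (cases "w0 \<le> w1")
    case True
    have "(w0 + w1)^2 \<le> (2 * w1)^2" using True assms by (intro power_mono) auto
    also have "\<dots> = 4 * w1 * w1" by (simp add: power2_eq_square)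
    also have "\<dots> \<le> 4 * w1 * (E * w0)" using assms by (intro mult_left_mono) auto
    finally show ?thesis by (simp add: algebra_simps)
  next
    case False
    have "(w0 + w1)^2 \<le> (2 * w0)^2" using False assms by (intro power_mono) auto
    also have "\<dots> = 4 * w0 * w0" by (simp add: power2_eq_square)
    also have "\<dots> \<le> 4 * w0 * (E * w1)" using assms by (intro mult_left_mono) auto
    finally show ?thesis by (simp add: algebra_simps)
  qed
  then have h: "(w0 + w1)^2 \<le> w0 * w1 * (4 * E)" by (simp add: algebra_simps)
  have E: "0 < 4 * E" using assms by simp
  have T2: "0 < (w0 + w1)^2" using assms by simp
  have "(w0 + w1)^2 / (4 * E) \<le> w0 * w1" using h E by (simp add: pos_divide_le_eq)
  then have "1 / (4 * E) * (w0 + w1)^2 \<le> w0 * w1" by simp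
  then show ?thesis using T2 by (simp add: pos_le_divide_eq)
qed

lemma est_bound:
  fixes f :: "nat set \<Rightarrow> real"
  assumes N: "0 \<le> N" and inc: "\<forall>S\<subseteq>{0..<m}. \<forall>j\<in>{0..<m}-S. N \<le> f (insert j S) - f S"
    and b: "\<forall>i. 0 \<le> b i" and w: "wok \<epsilon> b m w0 w1" and eps: "0 \<le> \<epsilon>"
  shows "(\<Sum>S\<in>Pow {0..<m}. piw {0..<m} w0 w1 S) * (N^2 * (real m / (4 * exp (2*\<epsilon>))))
     \<le> (\<Sum>S\<in>Pow {0..<m}. piw {0..<m} w0 w1 S * (x - f S)^2)"
proof -
  define J where "J = {0..<m::nat}"
  have wJ: "\<forall>j\<in>J. 0 \<le> w0 j \<and> 0 \<le> w1 j" using w unfolding wok_def J_def by simp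
  have lf: "N^2 * (\<Sum>j\<in>J. w0 j * w1 j / (w0 j + w1 j)^2) * (\<Prod>j\<in>J. w0 j + w1 j)
     \<le> (\<Sum>S\<in>Pow J. piw J w0 w1 S * (x - f S)^2)"
  proof -
    have fJ: "finite J" by (simp add: J_def)
    have inc': "\<forall>S\<subseteq>J. \<forall>j\<in>J-S. N \<le> f (insert j S) - f S" using inc unfolding J_def .
    show ?thesis by (rule leaf[OF fJ wJ N inc'])
  qed
  have P0: "0 \<le> (\<Prod>j\<in>J. w0 j + w1 j)" using wJ by (intro prod_nonneg) auto
  have ineq: "(\<Prod>j\<in>J. w0 j + w1 j) * (N^2 * (real m / (4 * exp (2*\<epsilon>))))
      \<le> N^2 * (\<Sum>j\<in>J. w0 j * w1 j / (w0 j + w1 j)^2) * (\<Prod>j\<in>J. w0 j + w1 j)"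
  proof (cases "\<forall>j\<in>J. 0 < w0 j + w1 j")
    case True
    have "real m / (4 * exp (2*\<epsilon>)) = (\<Sum>j\<in>J. 1 / (4 * exp (2*\<epsilon>)))" unfolding J_def by simp
    also have "\<dots> \<le> (\<Sum>j\<in>J. w0 j * w1 j / (w0 j + w1 j)^2)"
    proof (intro sum_mono ratio_bound)
      fix j assume j: "j \<in> J"
      define \<beta> where "\<beta> = 2*\<epsilon> - b (2*j) - b (2*j+1)"
      have wj: "0 \<le> w0 j" "0 \<le> w1 j" "w1 j \<le> exp \<beta> * w0 j" "w0 j \<le> exp \<beta> * w1 j"
        using w j unfolding wok_def J_def \<beta>_def by simp_all
      have "exp \<beta> \<le> exp (2*\<epsilon>)" using b[rule_format, of "2*j"] b[rule_format, of "2*j+1"] unfolding \<beta>_def by simp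
      then have "exp \<beta> * w0 j \<le> exp (2*\<epsilon>) * w0 j" "exp \<beta> * w1 j \<le> exp (2*\<epsilon>) * w1 j"
        using wj by (auto intro: mult_right_mono)
      then show "w1 j \<le> exp (2*\<epsilon>) * w0 j" "w0 j \<le> exp (2*\<epsilon>) * w1 j"
        using wj by linarith+
      show "0 \<le> w0 j" "0 \<le> w1 j" using wj by auto
      show "0 < w0 j + w1 j" using True j by auto
      show "1 \<le> exp (2*\<epsilon>)" using eps by simp
    qed
    finally have "real m / (4 * exp (2*\<epsilon>)) \<le> (\<Sum>j\<in>J. w0 j * w1 j / (w0 j + w1 j)^2)" .
    then have "N^2 * (real m / (4 * exp (2*\<epsilon>))) \<le> N^2 * (\<Sum>j\<in>J. w0 j * w1 j / (w0 j + w1 j)^2)"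
      by (intro mult_left_mono) auto
    from mult_right_mono[OF this P0] show ?thesis by (simp add: mult.commute)
  next
    case False
    then obtain j where "j \<in> J" "\<not> 0 < w0 j + w1 j" by blast
    then have "j \<in> J" "w0 j + w1 j = 0" using wJ by auto
    then have "(\<Prod>j\<in>J. w0 j + w1 j) = 0" unfolding J_def by (intro prod_zero) auto
    then show ?thesis by simp
  qed
  have sp: "(\<Sum>S\<in>Pow J. piw J w0 w1 S) = (\<Prod>j\<in>J. w0 j + w1 j)"
    by (rule sum_piw) (simp add: J_def)
  show ?thesis unfolding J_def[symmetric] sp by (rule order_trans[OF ineq lf])
qed


lemma core:
  fixes f :: "nat set \<Rightarrow> real"
  assumes "valid n b P"
  shows "2*m \<le> n \<Longrightarrow> 0 \<le> N \<Longrightarrow> (\<forall>S\<subseteq>{0..<m}. \<forall>j\<in>{0..<m}-S. N \<le> f (insert j S) - f S) \<Longrightarrow>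
    0 \<le> \<epsilon> \<Longrightarrow> (\<forall>i. 0 \<le> b i) \<Longrightarrow> wok \<epsilon> b m w0 w1 \<Longrightarrow>
   ennreal ((\<Sum>S\<in>Pow {0..<m}. piw {0..<m} w0 w1 S) * (N^2 * (real m / (4 * exp (2*\<epsilon>)))))
     \<le> (\<Sum>S\<in>Pow {0..<m}. ennreal (piw {0..<m} w0 w1 S) * sq_error P (Gr n m S) (f S))"
  using assms
proof (induction arbitrary: w0 w1 rule: valid.induct)
  case (valid_Est n b x)
  have pn: "0 \<le> piw {0..<m} w0 w1 S" if "S \<in> Pow {0..<m}" for S
    using valid_Est.prems(6) that by (intro piw_nonneg) (auto simp: wok_def)
  have eq: "(\<Sum>S\<in>Pow {0..<m}. ennreal (piw {0..<m} w0 w1 S) * sq_error (Est x) (Gr n m S) (f S))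
      = ennreal (\<Sum>S\<in>Pow {0..<m}. piw {0..<m} w0 w1 S * (x - f S)^2)"
  proof -
    have "(\<Sum>S\<in>Pow {0..<m}. ennreal (piw {0..<m} w0 w1 S) * sq_error (Est x) (Gr n m S) (f S))
       = (\<Sum>S\<in>Pow {0..<m}. ennreal (piw {0..<m} w0 w1 S * (x - f S)^2))"
      using pn by (intro sum.cong refl) (simp add: sq_error_Est ennreal_mult)
    also have "\<dots> = ennreal (\<Sum>S\<in>Pow {0..<m}. piw {0..<m} w0 w1 S * (x - f S)^2)"
      by (rule sum_ennreal) (use pn in auto)
    finally show ?thesis .
  qed
  have ineq: "(\<Sum>S\<in>Pow {0..<m}. piw {0..<m} w0 w1 S) * (N^2 * (real m / (4 * exp (2*\<epsilon>))))
     \<le> (\<Sum>S\<in>Pow {0..<m}. piw {0..<m} w0 w1 S * (x - f S)^2)"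
    using valid_Est.prems by (intro est_bound) auto
  show ?case unfolding eq by (rule ennreal_leI[OF ineq])
next
  case (valid_Ask i n e b R Out k)
  define J where "J = {0..<m::nat}"
  define K where "K = N^2 * (real m / (4 * exp (2*\<epsilon>)))"
  define b' where "b' = b(i := b i - e)"
  have fJ: "finite J" by (simp add: J_def)
  have mn: "2*m \<le> n" and N: "0 \<le> N" and inc: "\<forall>S\<subseteq>J. \<forall>j\<in>J-S. N \<le> f (insert j S) - f S"
    and eps: "0 \<le> \<epsilon>" and bnn: "\<forall>i. 0 \<le> b i" and w: "wok \<epsilon> b m w0 w1"
    using valid_Ask.prems unfolding J_def by auto
  have b'nn: "\<forall>i. 0 \<le> b' i" using bnn valid_Ask.hyps unfolding b'_def by auto
  have IH: "ennreal ((\<Sum>S\<in>Pow J. piw J w0' w1' S) * K)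
     \<le> (\<Sum>S\<in>Pow J. ennreal (piw J w0' w1' S) * sq_error (k y) (Gr n m S) (f S))"
    if "wok \<epsilon> b' m w0' w1'" for y w0' w1'
    using valid_Ask.IH mn N valid_Ask.prems(3) eps b'nn that unfolding J_def K_def b'_def by blast
  have Rprob: "\<And>a. R a \<in> space (prob_algebra Out)" using valid_Ask.hyps by auto
  have meas: "\<And>G. (\<lambda>y. run (k y) G) \<in> Out \<rightarrow>\<^sub>M prob_algebra borel" using valid_Ask.hyps by auto
  have Rps: "prob_space (R a)" "sets (R a) = sets Out" for a
    using Rprob[of a] by (auto simp: space_prob_algebra)
  define h where "h S y = sq_error (k y) (Gr n m S) (f S)" for S y
  have sqA: "sq_error (Ask i Out R k) (Gr n m S) (f S) = (\<integral>\<^sup>+y. h S y \<partial>R (Gr n m S i))" for S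
    unfolding h_def by (rule sq_error_Ask[OF Rprob meas])
  have hmeas: "(\<lambda>y. h S y) \<in> borel_measurable (R a)" for S a
    using sq_error_meas[OF meas] measurable_cong_sets[OF Rps(2)[of a] refl] unfolding h_def by blast
  have pn: "0 \<le> piw J w0 w1 S" if "S \<in> Pow J" for S
    using w that by (intro piw_nonneg) (auto simp: wok_def J_def)
  have Kn: "0 \<le> K" unfolding K_def using N by simp
  have LHS: "ennreal ((\<Sum>S\<in>Pow J. piw J w0 w1 S) * K) = (\<Sum>S\<in>Pow J. ennreal (piw J w0 w1 S * K))"
    unfolding sum_distrib_right by (rule sum_ennreal[symmetric]) (use pn Kn in auto)
  show ?case
  proof (cases "i < 2*m")
    case False
    define Q where "Q = R (Gr n m {} i)"
    have RS: "R (Gr n m S i) = Q" for S using Gr_far[of m i n S] False unfolding Q_def by simp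
    interpret Q: prob_space Q unfolding Q_def by (rule Rps)
    have wok': "wok \<epsilon> b' m w0 w1"
    proof -
      have "b' (2*j) = b (2*j) \<and> b' (2*j+1) = b (2*j+1)" if "j < m" for j
        using False that unfolding b'_def by auto
      then show ?thesis using w unfolding wok_def by simp
    qed
    have "(\<Sum>S\<in>Pow J. ennreal (piw J w0 w1 S) * sq_error (Ask i Out R k) (Gr n m S) (f S))
       = (\<integral>\<^sup>+y. (\<Sum>S\<in>Pow J. ennreal (piw J w0 w1 S) * h S y) \<partial>Q)"
      unfolding sqA RS
      using hmeas[of _ "Gr n m {} i"] unfolding Q_def[symmetric]
      by (subst nn_integral_sum) (auto simp: nn_integral_cmult)
    also have "\<dots> \<ge> (\<integral>\<^sup>+y. ennreal ((\<Sum>S\<in>Pow J. piw J w0 w1 S) * K) \<partial>Q)"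
      using IH[OF wok'] unfolding h_def by (intro nn_integral_mono) auto
    also have "(\<integral>\<^sup>+y. ennreal ((\<Sum>S\<in>Pow J. piw J w0 w1 S) * K) \<partial>Q) = ennreal ((\<Sum>S\<in>Pow J. piw J w0 w1 S) * K)"
      using Q.emeasure_space_1 by simp
    finally show ?thesis unfolding J_def K_def by simp
  next
    case True
    define j0 where "j0 = i div 2"
    have j0: "j0 \<in> J" "j0 < m" using True unfolding j0_def J_def by auto
    have i2: "i = 2*j0 \<or> i = 2*j0+1" unfolding j0_def by auto
    define Q0 where "Q0 = R (Gr n m {} i)"
    define Q1 where "Q1 = R (Gr n m {j0} i)"
    have RS: "R (Gr n m S i) = (if j0 \<in> S then Q1 else Q0)" for S
      using Gr_near[OF True, of n S] unfolding Q0_def Q1_def j0_def by simp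
    have nb: "neighboring n (Gr n m {} i) (Gr n m {j0} i)" "neighboring n (Gr n m {j0} i) (Gr n m {} i)"
      using Gr_neighboring[OF True mn] neighboring_sym unfolding j0_def by auto
    have ldp: "edge_ldp n e Out R" using valid_Ask.hyps by auto
    have sQ: "sets Q0 = sets Out" "sets Q1 = sets Out" unfolding Q0_def Q1_def by (simp_all add: Rps)
    have up: "\<forall>A\<in>sets Q0. measure Q1 A \<le> exp e * measure Q0 A"
      using ldp nb(2) sQ unfolding edge_ldp_def Q0_def Q1_def by auto
    have lo: "\<forall>A\<in>sets Q0. measure Q0 A \<le> exp e * measure Q1 A"
      using ldp nb(1) sQ unfolding edge_ldp_def Q0_def Q1_def by auto
    obtain qr where qr: "qr \<in> borel_measurable Q0" and qb: "\<forall>y. 0 \<le> qr y \<and> qr y \<le> exp e \<and> 1 \<le> exp e * qr y"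
      and qint: "\<forall>h\<in>borel_measurable Q0. (\<integral>\<^sup>+y. h y \<partial>Q1) = (\<integral>\<^sup>+y. ennreal (qr y) * h y \<partial>Q0)"
      using RN_real[of Q0 Q1 e] Rps sQ up lo valid_Ask.hyps unfolding Q0_def Q1_def by auto
    interpret Q0: prob_space Q0 unfolding Q0_def by (rule Rps)
    interpret Q1: prob_space Q1 unfolding Q1_def by (rule Rps)
    define \<rho> where "\<rho> S y = (if j0 \<in> S then qr y else 1)" for S y
    have \<rho>m: "(\<lambda>y. ennreal (\<rho> S y)) \<in> borel_measurable Q0" for S
      using qr unfolding \<rho>_def by measurable
    have \<rho>n: "0 \<le> \<rho> S y" for S y using qb unfolding \<rho>_def by auto
    have hQ0: "(\<lambda>y. h S y) \<in> borel_measurable Q0" for S unfolding Q0_def by (rule hmeas)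
    have int: "(\<integral>\<^sup>+y. h S y \<partial>R (Gr n m S i)) = (\<integral>\<^sup>+y. ennreal (\<rho> S y) * h S y \<partial>Q0)" for S
      using qint hQ0[of S] unfolding RS \<rho>_def by auto
    have int1: "(\<integral>\<^sup>+y. ennreal (\<rho> S y) \<partial>Q0) = 1" for S
    proof (cases "j0 \<in> S")
      case True
      have "(\<integral>\<^sup>+y. 1 \<partial>Q1) = (\<integral>\<^sup>+y. ennreal (qr y) * 1 \<partial>Q0)" by (rule qint[rule_format]) simp
      then show ?thesis using True Q1.emeasure_space_1 unfolding \<rho>_def by simp
    next
      case False
      then show ?thesis using Q0.emeasure_space_1 unfolding \<rho>_def by simp
    qed
    define w1' where "w1' y = w1(j0 := w1 j0 * qr y)" for y
    have pupd: "piw J w0 (w1' y) S = piw J w0 w1 S * \<rho> S y" if "S \<in> Pow J" for S y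
      unfolding w1'_def \<rho>_def using piw_upd[OF fJ j0(1)] that by auto
    have wok': "wok \<epsilon> b' m w0 (w1' y)" for y
      unfolding wok_def
    proof (intro allI impI)
      fix j assume j: "j < m"
      show "0 \<le> w0 j \<and> 0 \<le> w1' y j \<and> w1' y j \<le> exp (2*\<epsilon> - b' (2*j) - b' (2*j+1)) * w0 j
         \<and> w0 j \<le> exp (2*\<epsilon> - b' (2*j) - b' (2*j+1)) * w1' y j"
      proof (cases "j = j0")
        case False
        have "b' (2*j) = b (2*j)" "b' (2*j+1) = b (2*j+1)" using i2 False unfolding b'_def by auto
        then show ?thesis using w j False unfolding wok_def w1'_def by simp
      next
        case True
        define \<beta> where "\<beta> = 2*\<epsilon> - b (2*j) - b (2*j+1)"
        have "2*\<epsilon> - b' (2*j) - b' (2*j+1) = \<beta> + e" using i2 True unfolding b'_def \<beta>_def by auto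
        then have ex: "exp (2*\<epsilon> - b' (2*j) - b' (2*j+1)) = exp \<beta> * exp e" by (simp add: exp_add)
        have wj: "0 \<le> w0 j" "0 \<le> w1 j" "w1 j \<le> exp \<beta> * w0 j" "w0 j \<le> exp \<beta> * w1 j"
          using w j unfolding wok_def \<beta>_def by simp_all
        have q: "0 \<le> qr y" "qr y \<le> exp e" "1 \<le> exp e * qr y" using qb by auto
        have w1'j: "w1' y j = w1 j * qr y" unfolding w1'_def True by simp
        have a1: "0 \<le> w1 j * qr y" using wj q by simp
        have "w1 j * qr y \<le> w1 j * exp e" using wj q by (intro mult_left_mono) auto
        also have "\<dots> \<le> exp \<beta> * w0 j * exp e" using wj by (intro mult_right_mono) auto
        finally have a2: "w1 j * qr y \<le> exp \<beta> * exp e * w0 j" by (simp add: algebra_simps)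
        have "w0 j \<le> exp \<beta> * w1 j" by (rule wj(4))
        also have "\<dots> \<le> exp \<beta> * w1 j * (exp e * qr y)" using q wj
          by (metis mult_left_mono mult.right_neutral exp_ge_zero mult_nonneg_nonneg)
        finally have a3: "w0 j \<le> exp \<beta> * exp e * (w1 j * qr y)" by (simp add: algebra_simps)
        show ?thesis unfolding ex w1'j using wj(1) a1 a2 a3 by simp
      qed
    qed
    have "(\<Sum>S\<in>Pow J. ennreal (piw J w0 w1 S) * sq_error (Ask i Out R k) (Gr n m S) (f S))
       = (\<Sum>S\<in>Pow J. ennreal (piw J w0 w1 S) * (\<integral>\<^sup>+y. ennreal (\<rho> S y) * h S y \<partial>Q0))"
      unfolding sqA int by simp
    also have "\<dots> = (\<integral>\<^sup>+y. (\<Sum>S\<in>Pow J. ennreal (piw J w0 w1 S) * (ennreal (\<rho> S y) * h S y)) \<partial>Q0)"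
      using \<rho>m hQ0 by (subst nn_integral_sum) (auto simp: nn_integral_cmult)
    also have "\<dots> = (\<integral>\<^sup>+y. (\<Sum>S\<in>Pow J. ennreal (piw J w0 (w1' y) S) * h S y) \<partial>Q0)"
      using pn \<rho>n by (intro nn_integral_cong sum.cong refl) (auto simp: pupd ennreal_mult mult.assoc)
    also have "\<dots> \<ge> (\<integral>\<^sup>+y. ennreal ((\<Sum>S\<in>Pow J. piw J w0 (w1' y) S) * K) \<partial>Q0)"
      using IH[OF wok'] unfolding h_def by (intro nn_integral_mono) auto
    also have "(\<integral>\<^sup>+y. ennreal ((\<Sum>S\<in>Pow J. piw J w0 (w1' y) S) * K) \<partial>Q0)
       = (\<integral>\<^sup>+y. (\<Sum>S\<in>Pow J. ennreal (piw J w0 w1 S * K) * ennreal (\<rho> S y)) \<partial>Q0)"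
    proof (intro nn_integral_cong)
      fix y
      have "(\<Sum>S\<in>Pow J. piw J w0 (w1' y) S) * K = (\<Sum>S\<in>Pow J. piw J w0 w1 S * K * \<rho> S y)"
        unfolding sum_distrib_right by (intro sum.cong refl) (simp add: pupd mult_ac)
      also have "ennreal \<dots> = (\<Sum>S\<in>Pow J. ennreal (piw J w0 w1 S * K * \<rho> S y))"
        by (rule sum_ennreal[symmetric]) (use pn \<rho>n Kn in auto)
      also have "\<dots> = (\<Sum>S\<in>Pow J. ennreal (piw J w0 w1 S * K) * ennreal (\<rho> S y))"
        by (intro sum.cong refl ennreal_mult) (use pn \<rho>n Kn in auto)
      finally show "ennreal ((\<Sum>S\<in>Pow J. piw J w0 (w1' y) S) * K) = (\<Sum>S\<in>Pow J. ennreal (piw J w0 w1 S * K) * ennreal (\<rho> S y))" .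
    qed
    also have "\<dots> = (\<Sum>S\<in>Pow J. ennreal (piw J w0 w1 S * K) * (\<integral>\<^sup>+y. ennreal (\<rho> S y) \<partial>Q0))"
      using \<rho>m by (subst nn_integral_sum) (auto simp: nn_integral_cmult)
    also have "\<dots> = (\<Sum>S\<in>Pow J. ennreal (piw J w0 w1 S * K))" by (simp add: int1)
    finally show ?thesis using LHS unfolding J_def K_def by simp
  qed
qed



lemma lin_inj:
  fixes x y x' y' t :: nat
  assumes "x * t + y = x' * t + y'" "y < t" "y' < t"
  shows "x = x' \<and> y = y'"
proof -
  have t: "t \<noteq> 0" using assms by auto
  have "(x * t + y) div t = x" using assms(2) t by simp
  moreover have "(x' * t + y') div t = x'" using assms(3) t by simp
  moreover have "(x * t + y) mod t = y" using assms(2) t by simp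
  moreover have "(x' * t + y') mod t = y'" using assms(3) t by simp
  ultimately show ?thesis using assms(1) by metis
qed

definition CS :: "nat \<Rightarrow> nat \<Rightarrow> (nat \<Rightarrow> nat \<Rightarrow> bool) \<Rightarrow> nat set set set" where
  "CS k n G = {{{v a, v ((a + 1) mod k)} | a. a < k} | v.
        inj_on v {0..<k} \<and> (\<forall>a<k. v a < n) \<and> (\<forall>a<k. G (v a) (v ((a + 1) mod k)))}"

lemma cycle_count_CS: "cycle_count k n G = card (CS k n G)"
  unfolding cycle_count_def CS_def by simp

lemma CS_finite: "0 < k \<Longrightarrow> finite (CS k n G)"
proof -
  assume k: "0 < k"
  have "CS k n G \<subseteq> Pow (Pow {0..<n})"
  proof
    fix E assume "E \<in> CS k n G"
    then obtain v where E: "E = {{v a, v ((a + 1) mod k)} | a. a < k}" and v: "\<forall>a<k. v a < n"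
      unfolding CS_def by blast
    have "\<forall>a<k. v ((a + 1) mod k) < n" using v k by auto
    then show "E \<in> Pow (Pow {0..<n})" using v unfolding E by auto
  qed
  then show ?thesis by (rule finite_subset) simp
qed

lemma CS_mono: "(\<And>x y. G x y \<Longrightarrow> G' x y) \<Longrightarrow> CS k n G \<subseteq> CS k n G'"
  unfolding CS_def by blast


lemma cycle_inc:
  assumes k: "3 \<le> k" and mn: "2*m \<le> n" and S: "S \<subseteq> {0..<m}" and j: "j < m" "j \<notin> S"
  shows "card (CS k n (Gr n m S)) + ((n - 2*m) div (k-2))^(k-2) \<le> card (CS k n (Gr n m (insert j S)))"
proof -
  define t where "t = (n - 2*m) div (k-2)"
  have fin: "finite (CS k n (Gr n m (insert j S)))" using k by (intro CS_finite) auto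
  have mono: "CS k n (Gr n m S) \<subseteq> CS k n (Gr n m (insert j S))"
    by (rule CS_mono) (auto simp: Gr_def)
  show ?thesis
  proof (cases "t = 0")
    case True
    have "k - 2 \<noteq> 0" using k by simp
    then have z: "t^(k-2) = 0" using True by (simp add: power_0_left)
    show ?thesis unfolding t_def[symmetric] z using card_mono[OF fin mono] by simp
  next
    case False
    then have t: "0 < t" by simp
    have kt: "(k-2) * t \<le> n - 2*m" unfolding t_def by (simp add: mult.commute div_times_less_eq_dividend)
    define vert where "vert s a = (if a = 0 then 2*j else if a = 1 then 2*j+1 else 2*m + (a-2)*t + s (a-2))"
      for s :: "nat \<Rightarrow> nat" and a
    define E where "E s = {{vert s a, vert s ((a + 1) mod k)} | a. a < k}" for s
    define T where "T = PiE {0..<k-2} (\<lambda>_. {0..<t})"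
    have vlt: "vert s a < n" if "s \<in> T" "a < k" for s a
    proof (cases "a < 2")
      case True then show ?thesis using j mn unfolding vert_def by auto
    next
      case False
      have "s (a-2) < t" using that False unfolding T_def by auto
      then have "(a-2)*t + s (a-2) < (a-2)*t + t" by simp
      also have "\<dots> = (a-1)*t" using False by (simp add: algebra_simps)
      also have "\<dots> \<le> (k-2)*t" using that by (intro mult_right_mono) auto
      finally show ?thesis using kt False mn unfolding vert_def by auto
    qed
    have vsmall: "vert s a < 2*m \<longleftrightarrow> a < 2" for s a
      using j unfolding vert_def by auto
    have vsmall2: "vert s a div 2 = j" if "a < 2" for s a
      using that unfolding vert_def by auto
    have vinj: "inj_on (vert s) {0..<k}" if "s \<in> T" for s
    proof (rule inj_onI)
      fix a a' assume a: "a \<in> {0..<k}" and a': "a' \<in> {0..<k}" and eq: "vert s a = vert s a'"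
      show "a = a'"
      proof (cases "a < 2 \<or> a' < 2")
        case True
        then have "a < 2" "a' < 2" using vsmall[of s a] vsmall[of s a'] eq by auto
        then show ?thesis using eq unfolding vert_def by (auto split: if_splits)
      next
        case False
        have "s (a-2) < t" "s (a'-2) < t" using that a a' False unfolding T_def by auto
        moreover have "(a-2)*t + s (a-2) = (a'-2)*t + s (a'-2)" using eq False unfolding vert_def by auto
        ultimately have "a - 2 = a' - 2" using lin_inj by blast
        then show ?thesis using False by auto
      qed
    qed
    have succ_ne: "(a + 1) mod k \<noteq> a" if "a < k" for a
    proof (cases "a + 1 < k")
      case True then show ?thesis by simp
    next
      case False
      then have "a + 1 = k" using that by simp
      then show ?thesis using k by simp
    qed
    have ED: "E s \<in> CS k n (Gr n m (insert j S))" if s: "s \<in> T" for s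
      unfolding CS_def E_def
    proof (intro CollectI exI conjI)
      show "inj_on (vert s) {0..<k}" by (rule vinj[OF s])
      show "\<forall>a<k. vert s a < n" using vlt[OF s] by auto
      show "\<forall>a<k. Gr n m (insert j S) (vert s a) (vert s ((a + 1) mod k))"
      proof (intro allI impI)
        fix a assume a: "a < k"
        have a1: "(a + 1) mod k < k" using a by simp
        have ne: "vert s a \<noteq> vert s ((a + 1) mod k)"
          using inj_onD[OF vinj[OF s], of a "(a + 1) mod k"] a a1 succ_ne[OF a] by auto
        have "vert s a < 2*m \<Longrightarrow> vert s a div 2 = j" using vsmall vsmall2 by blast
        then show "Gr n m (insert j S) (vert s a) (vert s ((a + 1) mod k))"
          using vlt[OF s a] vlt[OF s a1] ne unfolding Gr_def by auto
      qed
    qed rule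
    have notG: "\<not> Gr n m S (2*j) (2*j+1)" "\<not> Gr n m S (2*j+1) (2*j)"
      using j unfolding Gr_def by auto
    have Ecnt: "{2*j, 2*j+1} \<in> E s" for s
    proof -
      have "(0 + 1) mod k = 1" using k by simp
      then have "{vert s 0, vert s ((0 + 1) mod k)} = {2*j, 2*j+1}" unfolding vert_def by simp
      then show ?thesis unfolding E_def using k by force
    qed
    have disj: "CS k n (Gr n m S) \<inter> E ` T = {}"
    proof (rule ccontr)
      assume "CS k n (Gr n m S) \<inter> E ` T \<noteq> {}"
      then obtain s where s: "E s \<in> CS k n (Gr n m S)" by blast
      then obtain v where Ev: "E s = {{v a, v ((a + 1) mod k)} | a. a < k}"
        and vG: "\<forall>a<k. Gr n m S (v a) (v ((a + 1) mod k))"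
        unfolding CS_def by blast
      from Ecnt[of s] Ev obtain a where a: "a < k" and ed: "{2*j, 2*j+1} = {v a, v ((a + 1) mod k)}" by auto
      have "Gr n m S (v a) (v ((a + 1) mod k))" using vG a by auto
      moreover have "(v a = 2*j \<and> v ((a + 1) mod k) = 2*j+1) \<or> (v a = 2*j+1 \<and> v ((a + 1) mod k) = 2*j)"
        using ed by (auto simp: doubleton_eq_iff)
      ultimately show False using notG by auto
    qed
    have UE: "\<Union>(E s) = vert s ` {0..<k}" for s
    proof
      show "\<Union>(E s) \<subseteq> vert s ` {0..<k}"
      proof
        fix x assume "x \<in> \<Union>(E s)"
        then obtain a where a: "a < k" and x: "x = vert s a \<or> x = vert s ((a + 1) mod k)"
          unfolding E_def by auto
        have "(a + 1) mod k < k" using a by simp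
        then show "x \<in> vert s ` {0..<k}" using x a by auto
      qed
      show "vert s ` {0..<k} \<subseteq> \<Union>(E s)"
      proof
        fix x assume "x \<in> vert s ` {0..<k}"
        then obtain a where a: "a < k" and x: "x = vert s a" by auto
        have "{vert s a, vert s ((a + 1) mod k)} \<in> E s" unfolding E_def using a by blast
        then show "x \<in> \<Union>(E s)" using x by blast
      qed
    qed
    have Einj: "inj_on E T"
    proof (rule inj_onI)
      fix s s' assume s: "s \<in> T" and s': "s' \<in> T" and eq: "E s = E s'"
      show "s = s'"
      proof (rule PiE_ext[OF s[unfolded T_def] s'[unfolded T_def]])
        fix l assume l: "l \<in> {0..<k-2}"
        have "vert s (l+2) \<in> \<Union>(E s)" unfolding UE using l by auto
        then have "vert s (l+2) \<in> vert s' ` {0..<k}" unfolding eq UE .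
        then obtain a where a: "a < k" and va: "vert s (l+2) = vert s' a" by auto
        have a2: "\<not> a < 2" using vsmall[of s "l+2"] vsmall[of s' a] va by auto
        have "s l < t" "s' (a-2) < t" using s s' l a a2 unfolding T_def by auto
        moreover have "l*t + s l = (a-2)*t + s' (a-2)" using va a2 unfolding vert_def by auto
        ultimately have "l = a - 2 \<and> s l = s' (a-2)" using lin_inj by blast
        then show "s l = s' l" by metis
      qed
    qed
    have cardT: "card T = t^(k-2)" unfolding T_def by (simp add: card_PiE)
    have sub: "CS k n (Gr n m S) \<union> E ` T \<subseteq> CS k n (Gr n m (insert j S))" using mono ED by auto
    have fin1: "finite (CS k n (Gr n m S))" "finite (E ` T)"
      using finite_subset[OF sub fin] by auto
    have "card (CS k n (Gr n m S)) + t^(k-2) = card (CS k n (Gr n m S) \<union> E ` T)"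
      using card_Un_disjoint[OF fin1 disj] card_image[OF Einj] cardT by simp
    also have "\<dots> \<le> card (CS k n (Gr n m (insert j S)))" by (rule card_mono[OF fin sub])
    finally show ?thesis unfolding t_def .
  qed
qed



lemma nat_bounds:
  fixes n m k t :: nat
  assumes k: "3 \<le> k" and n: "4*k \<le> n" and m: "m = n div 4" and t: "t = (n - 2*m) div (k-2)"
  shows "n \<le> 8*m" "n \<le> 4*(k-2)*t" "2*m \<le> n"
proof -
  have m1: "4*m + n mod 4 = n" unfolding m by simp
  have m2: "n mod 4 < 4" by simp
  show "n \<le> 8*m" "2*m \<le> n" using m1 m2 n k by linarith+
  define X where "X = t * (k-2)"
  define r where "r = (n - 2*m) mod (k-2)"
  have "X + r = n - 2*m" unfolding X_def r_def t by (rule div_mult_mod_eq)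
  moreover have "r < k - 2" unfolding r_def using k by simp
  ultimately have "n \<le> 4 * X" using m1 m2 n k by linarith
  then show "n \<le> 4*(k-2)*t" unfolding X_def by (simp add: algebra_simps)
qed

lemma real_bound:
  fixes n m k t :: nat and \<epsilon> :: real
  assumes k: "3 \<le> k" and n: "4*k \<le> n" and m: "m = n div 4" and t: "t = (n - 2*m) div (k-2)"
  shows "(1 / (4 * real (k-2)))^(2*(k-2)) / (32 * exp (2*\<epsilon>)) * real n ^ (2*k-3)
     \<le> (real (t^(k-2)))^2 * (real m / (4 * exp (2*\<epsilon>)))"
proof -
  note b = nat_bounds[OF assms]
  define \<alpha> where "\<alpha> = 1 / (4 * real (k-2))"
  have kk: "0 < real (k-2)" using k by simp
  have a0: "0 \<le> \<alpha> * real n" unfolding \<alpha>_def by simp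
  have "real n \<le> 4 * real (k-2) * real t" using b(2) by (metis of_nat_le_iff of_nat_mult of_nat_numeral)
  then have at: "\<alpha> * real n \<le> real t" unfolding \<alpha>_def using kk by (simp add: field_simps)
  have mm: "real n / 8 \<le> real m" using b(1) by simp
  have "(\<alpha> * real n)^(2*(k-2)) \<le> (real t)^(2*(k-2))" using at a0 by (intro power_mono) auto
  also have "\<dots> = (real (t^(k-2)))^2" by (simp add: power_mult[symmetric] mult.commute)
  finally have p1: "(\<alpha> * real n)^(2*(k-2)) \<le> (real (t^(k-2)))^2" .
  have p2: "real n / 8 / (4 * exp (2*\<epsilon>)) \<le> real m / (4 * exp (2*\<epsilon>))"
    using mm by (intro divide_right_mono) auto
  have "(\<alpha> * real n)^(2*(k-2)) * (real n / 8 / (4 * exp (2*\<epsilon>)))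
      \<le> (real (t^(k-2)))^2 * (real m / (4 * exp (2*\<epsilon>)))"
    using p1 p2 by (intro mult_mono) auto
  moreover have "(\<alpha> * real n)^(2*(k-2)) * (real n / 8 / (4 * exp (2*\<epsilon>)))
      = \<alpha>^(2*(k-2)) / (32 * exp (2*\<epsilon>)) * real n ^ (2*k-3)"
  proof -
    have e: "2*k - 3 = Suc (2*(k-2))" using k by simp
    show ?thesis unfolding e power_mult_distrib by (simp add: field_simps)
  qed
  ultimately show ?thesis unfolding \<alpha>_def by simp
qed

lemma powr_sq:
  fixes n k :: nat and c :: real
  assumes "3 \<le> k" "0 < n"
  shows "(c * real n powr (real k - 3/2))^2 = c^2 * real n ^ (2*k-3)"
proof -
  have "(real n powr (real k - 3/2))^2 = real n powr (real k - 3/2) * real n powr (real k - 3/2)"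
    by (simp add: power2_eq_square)
  also have "\<dots> = real n powr (2 * real k - 3)" by (simp add: powr_add[symmetric])
  also have "2 * real k - 3 = real (2*k-3)" using assms by simp
  also have "real n powr real (2*k-3) = real n ^ (2*k-3)" using assms by (intro powr_realpow) simp
  finally show ?thesis by (simp add: power_mult_distrib)
qed


theorem theorem4:
  fixes k :: nat and \<epsilon> :: real
  assumes "k \<ge> 3" and "\<epsilon> > 0"
  shows "\<not> (\<exists>A :: nat \<Rightarrow> 'o protocol.
            (\<forall>n. eps_edge_ldp_alg \<epsilon> n (A n)) \<and>
            (\<forall>c>0. \<forall>\<^sub>F n in sequentially. \<forall>G. graph_on n G \<longrightarrow>
               sq_error (A n) G (real (cycle_count k n G))
                 \<le> ennreal ((c * real n powr (real k - 3/2))\<^sup>2)))"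
proof
  assume "\<exists>A :: nat \<Rightarrow> 'o protocol.
            (\<forall>n. eps_edge_ldp_alg \<epsilon> n (A n)) \<and>
            (\<forall>c>0. \<forall>\<^sub>F n in sequentially. \<forall>G. graph_on n G \<longrightarrow>
               sq_error (A n) G (real (cycle_count k n G))
                 \<le> ennreal ((c * real n powr (real k - 3/2))\<^sup>2))"
  then obtain A :: "nat \<Rightarrow> 'o protocol" where alg: "\<And>n. valid n (\<lambda>_. \<epsilon>) (A n)"
    and err: "\<And>c. c > 0 \<Longrightarrow> \<forall>\<^sub>F n in sequentially. \<forall>G. graph_on n G \<longrightarrow>
               sq_error (A n) G (real (cycle_count k n G))
                 \<le> ennreal ((c * real n powr (real k - 3/2))\<^sup>2)"
    unfolding eps_edge_ldp_alg_def by blast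
  have k: "3 \<le> k" and eps: "0 < \<epsilon>" using assms by auto
  define C where "C = (1 / (4 * real (k-2)))^(2*(k-2)) / (32 * exp (2*\<epsilon>))"
  have Cpos: "0 < C" unfolding C_def using k by simp
  define c where "c = sqrt C / 2"
  have cpos: "0 < c" unfolding c_def using Cpos by simp
  have c2: "c^2 = C / 4" unfolding c_def using Cpos by (simp add: power_divide)
  obtain n0 where n0: "\<And>n G. n \<ge> n0 \<Longrightarrow> graph_on n G \<Longrightarrow> sq_error (A n) G (real (cycle_count k n G))
                 \<le> ennreal ((c * real n powr (real k - 3/2))\<^sup>2)"
    using err[OF cpos] unfolding eventually_sequentially by blast
  define n where "n = n0 + 4*k"
  define m where "m = n div 4"
  define t where "t = (n - 2*m) div (k-2)"
  define N where "N = real (t^(k-2))"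
  define f where "f S = real (cycle_count k n (Gr n m S))" for S
  define K where "K = N^2 * (real m / (4 * exp (2*\<epsilon>)))"
  define B where "B = (c * real n powr (real k - 3/2))\<^sup>2"
  have nk: "4*k \<le> n" unfolding n_def by simp
  have npos: "0 < n" using nk k by simp
  have mn: "2*m \<le> n" using nat_bounds[OF k nk m_def t_def] by simp
  have inc: "\<forall>S\<subseteq>{0..<m}. \<forall>j\<in>{0..<m}-S. N \<le> f (insert j S) - f S"
  proof (intro allI impI ballI)
    fix S j assume S: "S \<subseteq> {0..<m}" and j: "j \<in> {0..<m} - S"
    have "card (CS k n (Gr n m S)) + t^(k-2) \<le> card (CS k n (Gr n m (insert j S)))"
      using cycle_inc[OF k mn S, of j] j unfolding t_def by auto
    then have "real (card (CS k n (Gr n m S))) + real (t^(k-2)) \<le> real (card (CS k n (Gr n m (insert j S))))"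
      by (metis of_nat_add of_nat_le_iff)
    then show "N \<le> f (insert j S) - f S" unfolding f_def N_def cycle_count_CS by simp
  qed
  have wok1: "wok \<epsilon> (\<lambda>_. \<epsilon>) m (\<lambda>_. 1) (\<lambda>_. 1)" unfolding wok_def by simp
  have lower: "ennreal ((\<Sum>S\<in>Pow {0..<m}. piw {0..<m} (\<lambda>_. 1) (\<lambda>_. 1) S) * K)
     \<le> (\<Sum>S\<in>Pow {0..<m}. ennreal (piw {0..<m} (\<lambda>_. 1) (\<lambda>_. 1) S) * sq_error (A n) (Gr n m S) (f S))"
    unfolding K_def using core[OF alg mn _ inc _ _ wok1] eps unfolding N_def by simp
  have p1: "piw {0..<m} (\<lambda>_. 1) (\<lambda>_. 1) S = 1" for S unfolding piw_def by simp
  have cardP: "card (Pow {0..<m}) = 2^m" by (simp add: card_Pow)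
  have upper: "(\<Sum>S\<in>Pow {0..<m}. ennreal (piw {0..<m} (\<lambda>_. 1) (\<lambda>_. 1) S) * sq_error (A n) (Gr n m S) (f S))
     \<le> (\<Sum>S\<in>Pow {0..<m}. ennreal B)"
    unfolding p1 B_def f_def using n0[of n] Gr_graph unfolding n_def by (intro sum_mono) auto
  have "ennreal (2^m * K) \<le> ennreal (2^m * B)"
  proof -
    have e2: "ennreal (2^m) = 2^m" using ennreal_power[of "2::real" m] by simp
    show ?thesis using order_trans[OF lower upper] unfolding p1 cardP by (simp add: cardP ennreal_mult' e2)
  qed
  then have "2^m * K \<le> 2^m * B" unfolding B_def by (subst (asm) ennreal_le_iff) auto
  then have KB: "K \<le> B" by simp
  have "C * real n ^ (2*k-3) \<le> K" unfolding C_def K_def N_def using real_bound[OF k nk m_def t_def] by simp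
  moreover have "B = C / 4 * real n ^ (2*k-3)" unfolding B_def using powr_sq[OF k npos] c2 by simp
  moreover have "0 < real n ^ (2*k-3)" using npos by simp
  ultimately have "0 < C * real n ^ (2*k-3)" "C * real n ^ (2*k-3) \<le> K" "B = C * real n ^ (2*k-3) / 4"
    using Cpos by auto
  then show False using KB by linarith
qed


end
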